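(* Let $n\ge4$ and consider $Sp(2n,\mathbb{C})$ with the root data described in the context. There exist no weights $\mu_0,\lambda_0$ with $\mu_0+\lambda_0=\rho_{\mathrm{nc}}-\rho_{\mathrm c}$ satisfying simultaneously: (a) $(\mu_0,\alpha)\ge0$ and $(\lambda_0,\alpha)\ge0$ for all $\alpha\in\Delta_+^{\mathrm c}$; and (b) for every $\beta\in\Delta_+^{\mathrm{nc},1}$ there is $\alpha_\beta\in\Delta_+^{\mathrm c}$ with $(\mu_0-\beta,\alpha_\beta)<0$, and for every $\gamma\in\Delta_+^{\mathrm{nc},2}$ there is $\alpha_\gamma\in\Delta_+^{\mathrm c}$ with $(\lambda_0-\gamma,\alpha_\gamma)<0$.
   Context: For $Sp(2n,\mathbb{C})$ with compact Cartan subgroup $T\cong U(1)^n$ of $Sp(2n,\mathbb{R})$, weights are integral combinations $\sum_{i=1}^n a_ie_i^*$ ($a_i\in\mathbb Z$) with inner product $(e_i^*,e_j^* )=\delta_{ij}$. Consider the positive system (defining the non-classical period domain for weight $2n-1$ Hodge structures with all Hodge numbers $1$) $\Delta_+=\Delta_+^{\mathrm c}\cup\Delta_+^{\mathrm{nc},1}\cup\Delta_+^{\mathrm{nc},2}$ with $\Delta_+^{\mathrm c}=\{(-1)^{i-1}(e_i^*-e_j^* ):1\le i<j\le n\}$, $\Delta_+^{\mathrm{nc},1}=\{e_i^*+e_j^*:1\le i\le j\le n,\ i\text{ odd}\}$, $\Delta_+^{\mathrm{nc},2}=\{-e_i^*-e_j^*:1\le i\le j\le n,\ i\text{ even}\}$,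 and $\Delta_+^{\mathrm{nc}}=\{(-1)^{i-1}(e_i^*+e_j^* ):1\le i\le j\le n\}=\Delta_+^{\mathrm{nc},1}\cup\Delta_+^{\mathrm{nc},2}$. $\rho_{\mathrm c}$ and $\rho_{\mathrm{nc}}$ are half the sums of the roots in $\Delta_+^{\mathrm c}$ and $\Delta_+^{\mathrm{nc}}$. *)

theory Defs
  imports Complex_Main "HOL-Library.Function_Algebras"
begin

text \<open>Weights of Sp(2n,C) w.r.t. the compact Cartan T = U(1)^n: integral combinations
  sum_{i=1}^n a_i e_i^*, represented by their coefficient functions a :: nat => int,
  supported on the index set {1..n}.\<close>

type_synonym weight = "nat \<Rightarrow> int"

definition weights :: "nat \<Rightarrow> weight set" where
  "weights n = {a. \<forall>i. i \<notin> {1..n} \<longrightarrow> a i = 0}"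

definition ebasis :: "nat \<Rightarrow> weight" where
  "ebasis i = (\<lambda>k. if k = i then 1 else 0)"

definition ip :: "nat \<Rightarrow> weight \<Rightarrow> weight \<Rightarrow> int" where
  "ip n a b = (\<Sum>i=1..n. a i * b i)"

definition pos_compact :: "nat \<Rightarrow> weight set" where
  "pos_compact n = {(\<lambda>k. (-1) ^ (i - 1) * (ebasis i k - ebasis j k)) | i j.
                     1 \<le> i \<and> i < j \<and> j \<le> n}"

definition pos_nc1 :: "nat \<Rightarrow> weight set" where
  "pos_nc1 n = {(\<lambda>k. ebasis i k + ebasis j k) | i j.
                 1 \<le> i \<and> i \<le> j \<and> j \<le> n \<and> odd i}"

definition pos_nc2 :: "nat \<Rightarrow> weight set" where
  "pos_nc2 n = {(\<lambda>k. - (ebasis i k + ebasis j k)) | i j.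
                 1 \<le> i \<and> i \<le> j \<and> j \<le> n \<and> even i}"

definition pos_nc :: "nat \<Rightarrow> weight set" where
  "pos_nc n = pos_nc1 n \<union> pos_nc2 n"

definition rho_c :: "nat \<Rightarrow> nat \<Rightarrow> rat" where
  "rho_c n = (\<lambda>k. (1/2) * (\<Sum>\<alpha>\<in>pos_compact n. of_int (\<alpha> k)))"

definition rho_nc :: "nat \<Rightarrow> nat \<Rightarrow> rat" where
  "rho_nc n = (\<lambda>k. (1/2) * (\<Sum>\<alpha>\<in>pos_nc n. of_int (\<alpha> k)))"

end

theory Submission imports Defs begin

definition FF :: "nat \<Rightarrow> nat \<Rightarrow> weight" where
  "FF i j = (\<lambda>k. (-1) ^ (i - 1) * (ebasis i k - ebasis j k))"
definition GG :: "nat \<Rightarrow> nat \<Rightarrow> weight" where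
  "GG i j = (\<lambda>k. (-1) ^ (i - 1) * (ebasis i k + ebasis j k))"

lemma sgn_odd: "odd i \<Longrightarrow> (-1::int) ^ (i - 1) = 1"
  by (simp add: power_minus_odd)
lemma sgn_even: "even i \<Longrightarrow> 1 \<le> i \<Longrightarrow> (-1::int) ^ (i - 1) = -1"
  by (cases i) auto

lemma pc_eq: "pos_compact n = (\<lambda>(i,j). FF i j) ` {(i,j). 1 \<le> i \<and> i < j \<and> j \<le> n}"
  unfolding pos_compact_def FF_def by auto

lemma pnc_eq: "pos_nc n = (\<lambda>(i,j). GG i j) ` {(i,j). 1 \<le> i \<and> i \<le> j \<and> j \<le> n}"
proof -
  have "pos_nc1 n \<union> pos_nc2 n = (\<lambda>(i,j). GG i j) ` {(i,j). 1 \<le> i \<and> i \<le> j \<and> j \<le> n}"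
  proof (intro equalityI subsetI)
    fix x assume "x \<in> pos_nc1 n \<union> pos_nc2 n"
    then show "x \<in> (\<lambda>(i,j). GG i j) ` {(i,j). 1 \<le> i \<and> i \<le> j \<and> j \<le> n}"
    proof
      assume "x \<in> pos_nc1 n"
      then obtain i j where x: "x = (\<lambda>k. ebasis i k + ebasis j k)" "1 \<le> i" "i \<le> j" "j \<le> n" "odd i"
        unfolding pos_nc1_def by auto
      show ?thesis by (rule image_eqI[where x="(i,j)"]) (use x in \<open>auto simp: GG_def sgn_odd\<close>)
    next
      assume "x \<in> pos_nc2 n"
      then obtain i j where x: "x = (\<lambda>k. - (ebasis i k + ebasis j k))" "1 \<le> i" "i \<le> j" "j \<le> n" "even i"
        unfolding pos_nc2_def by auto
      show ?thesis by (rule image_eqI[where x="(i,j)"]) (use x in \<open>auto simp: GG_def sgn_even\<close>)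
    qed
  next
    fix x assume "x \<in> (\<lambda>(i,j). GG i j) ` {(i,j). 1 \<le> i \<and> i \<le> j \<and> j \<le> n}"
    then obtain i j where x: "x = GG i j" "1 \<le> i" "i \<le> j" "j \<le> n" by auto
    show "x \<in> pos_nc1 n \<union> pos_nc2 n"
    proof (cases "odd i")
      case True then show ?thesis using x unfolding pos_nc1_def GG_def by (auto simp: sgn_odd)
    next
      case False then show ?thesis using x unfolding pos_nc2_def GG_def by (auto simp: sgn_even)
    qed
  qed
  then show ?thesis unfolding pos_nc_def .
qed

lemma sgn_nz: "(-1::int) ^ m \<noteq> 0" by simp

lemma FF_supp: "i \<noteq> j \<Longrightarrow> FF i j k \<noteq> 0 \<longleftrightarrow> k = i \<or> k = j"
  unfolding FF_def ebasis_def by auto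
lemma GG_supp: "GG i j k \<noteq> 0 \<longleftrightarrow> k = i \<or> k = j"
  unfolding GG_def ebasis_def by auto

lemma FF_inj: "inj_on (\<lambda>(i,j). FF i j) {(i,j). 1 \<le> i \<and> i < j \<and> j \<le> n}"
proof (rule inj_onI, clarsimp)
  fix i j i' j' assume h: "FF i j = FF i' j'" "i < j" "i' < j'"
  have "\<forall>k. (k = i \<or> k = j) \<longleftrightarrow> (k = i' \<or> k = j')"
    using FF_supp[of i j] FF_supp[of i' j'] h by (metis less_irrefl)
  then show "i = i' \<and> j = j'" using h(2,3) by (metis not_less_iff_gr_or_eq)
qed

lemma GG_inj: "inj_on (\<lambda>(i,j). GG i j) {(i,j). 1 \<le> i \<and> i \<le> j \<and> j \<le> n}"
proof (rule inj_onI, clarsimp)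
  fix i j i' j' assume h: "GG i j = GG i' j'" "i \<le> j" "i' \<le> j'"
  have "\<forall>k. (k = i \<or> k = j) \<longleftrightarrow> (k = i' \<or> k = j')"
    using GG_supp[of i j] GG_supp[of i' j'] h by metis
  then show "i = i' \<and> j = j'" using h(2,3) by (metis le_antisym)
qed

lemma altsum: "(\<Sum>i=1..k. (-1::int) ^ (i - 1)) = (if odd k then 1 else 0)"
  by (induction k) (auto simp: sgn_odd sgn_even)

lemma delta_int:
  assumes "1 \<le> k" "k \<le> n"
  shows "(\<Sum>\<alpha>\<in>pos_nc n. \<alpha> k) - (\<Sum>\<alpha>\<in>pos_compact n. \<alpha> k) = 2 * (if odd k then 1 else 0)"
proof -
  have P: "{(i,j). 1 \<le> i \<and> i < j \<and> j \<le> n} = Sigma {1..n} (\<lambda>i. {i<..n})" by auto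
  have Q: "{(i,j). 1 \<le> i \<and> i \<le> j \<and> j \<le> n} = Sigma {1..n} (\<lambda>i. {i..n})" by auto
  have A: "(\<Sum>\<alpha>\<in>pos_nc n. \<alpha> k) = (\<Sum>i\<in>{1..n}. \<Sum>j\<in>{i..n}. GG i j k)"
  proof -
    have "(\<Sum>\<alpha>\<in>pos_nc n. \<alpha> k) = (\<Sum>p\<in>{(i,j). 1 \<le> i \<and> i \<le> j \<and> j \<le> n}. GG (fst p) (snd p) k)"
      unfolding pnc_eq by (subst sum.reindex[OF GG_inj]) (simp add: case_prod_beta)
    also have "\<dots> = (\<Sum>p\<in>Sigma {1..n} (\<lambda>i. {i..n}). GG (fst p) (snd p) k)" unfolding Q ..
    also have "\<dots> = (\<Sum>i\<in>{1..n}. \<Sum>j\<in>{i..n}. GG i j k)" by (simp add: sum.Sigma case_prod_beta)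
    finally show ?thesis .
  qed
  have B: "(\<Sum>\<alpha>\<in>pos_compact n. \<alpha> k) = (\<Sum>i\<in>{1..n}. \<Sum>j\<in>{i<..n}. FF i j k)"
  proof -
    have "(\<Sum>\<alpha>\<in>pos_compact n. \<alpha> k) = (\<Sum>p\<in>{(i,j). 1 \<le> i \<and> i < j \<and> j \<le> n}. FF (fst p) (snd p) k)"
      unfolding pc_eq by (subst sum.reindex[OF FF_inj]) (simp add: case_prod_beta)
    also have "\<dots> = (\<Sum>p\<in>Sigma {1..n} (\<lambda>i. {i<..n}). FF (fst p) (snd p) k)" unfolding P ..
    also have "\<dots> = (\<Sum>i\<in>{1..n}. \<Sum>j\<in>{i<..n}. FF i j k)" by (simp add: sum.Sigma case_prod_beta)
    finally show ?thesis .
  qed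
  have C: "(\<Sum>j\<in>{i..n}. GG i j k) - (\<Sum>j\<in>{i<..n}. FF i j k) = 2 * (-1) ^ (i - 1) * (if i \<le> k then 1 else 0)"
    if "i \<in> {1..n}" for i
  proof -
    have "{i..n} = insert i {i<..n}" using that by auto
    then have "(\<Sum>j\<in>{i..n}. GG i j k) = GG i i k + (\<Sum>j\<in>{i<..n}. GG i j k)" by simp
    moreover have "(\<Sum>j\<in>{i<..n}. GG i j k) - (\<Sum>j\<in>{i<..n}. FF i j k)
        = (\<Sum>j\<in>{i<..n}. 2 * (-1) ^ (i - 1) * (if j = k then 1 else 0))"
      unfolding sum_subtractf[symmetric] by (rule sum.cong) (auto simp: GG_def FF_def ebasis_def)
    moreover have "(\<Sum>j\<in>{i<..n}. 2 * (-1) ^ (i - 1) * (if j = k then 1 else 0)) =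
        (2 * (-1) ^ (i - 1) * (if i < k then 1 else 0) :: int)"
      using assms by (simp add: sum_distrib_left[symmetric] sum.delta')
    ultimately show ?thesis by (auto simp: GG_def ebasis_def)
  qed
  have "(\<Sum>\<alpha>\<in>pos_nc n. \<alpha> k) - (\<Sum>\<alpha>\<in>pos_compact n. \<alpha> k)
      = (\<Sum>i\<in>{1..n}. 2 * (-1) ^ (i - 1) * (if i \<le> k then 1 else 0))"
    unfolding A B sum_subtractf[symmetric] using C by (rule sum.cong[OF refl])
  also have "\<dots> = (\<Sum>i\<in>{1..k}. 2 * (-1) ^ (i - 1))"
    using assms by (intro sum.mono_neutral_cong_right) auto
  also have "\<dots> = 2 * (if odd k then 1 else 0)"
    using altsum[of k] by (simp add: sum_distrib_left[symmetric])
  finally show ?thesis .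
qed

lemma delta_rat:
  assumes "1 \<le> k" "k \<le> n"
  shows "rho_nc n k - rho_c n k = (if odd k then 1 else 0)"
proof -
  have "rho_nc n k - rho_c n k = 1/2 * of_int ((\<Sum>\<alpha>\<in>pos_nc n. \<alpha> k) - (\<Sum>\<alpha>\<in>pos_compact n. \<alpha> k))"
    unfolding rho_nc_def rho_c_def by (simp add: algebra_simps)
  then show ?thesis using delta_int[OF assms] by simp
qed

lemma sum_eb: "i \<in> {1..n} \<Longrightarrow> (\<Sum>k=1..n. w k * ebasis i k) = w i"
  unfolding ebasis_def by (simp add: if_distrib[of "\<lambda>x. w _ * x"] sum.delta cong: if_cong)

lemma ip_FF:
  assumes "i \<noteq> j" "1 \<le> i" "i \<le> n" "1 \<le> j" "j \<le> n"
  shows "ip n w (FF i j) = (-1) ^ (i - 1) * (w i - w j)"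
proof -
  have "ip n w (FF i j) = (-1) ^ (i - 1) * ((\<Sum>k=1..n. w k * ebasis i k) - (\<Sum>k=1..n. w k * ebasis j k))"
    unfolding ip_def FF_def by (simp add: sum_subtractf[symmetric] sum_distrib_left algebra_simps)
  then show ?thesis using assms sum_eb[of i n w] sum_eb[of j n w] by simp
qed


lemma par_L1: "even (p::nat) \<Longrightarrow> even j \<Longrightarrow> p - 2 < j \<Longrightarrow> j \<le> p + 1 \<Longrightarrow> 4 \<le> p \<Longrightarrow> j = p"
  by (elim evenE) auto
lemma par_L2: "odd (p::nat) \<Longrightarrow> odd j \<Longrightarrow> p - 2 < j \<Longrightarrow> j \<le> p + 1 \<Longrightarrow> 3 \<le> p \<Longrightarrow> j = p"
  by (elim oddE) auto

theorem proposition6p7: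
  fixes n :: nat
  assumes "n \<ge> 4"
  shows "\<not> (\<exists>mu0 lam0. mu0 \<in> weights n \<and> lam0 \<in> weights n \<and>
            (\<lambda>k. of_int (mu0 k + lam0 k)) = (\<lambda>k. rho_nc n k - rho_c n k) \<and>
            (\<forall>\<alpha>\<in>pos_compact n. ip n mu0 \<alpha> \<ge> 0 \<and> ip n lam0 \<alpha> \<ge> 0) \<and>
            (\<forall>\<beta>\<in>pos_nc1 n. \<exists>\<alpha>\<in>pos_compact n. ip n (mu0 - \<beta>) \<alpha> < 0) \<and>
            (\<forall>\<gamma>\<in>pos_nc2 n. \<exists>\<alpha>\<in>pos_compact n. ip n (lam0 - \<gamma>) \<alpha> < 0))"
proof
  assume "\<exists>mu0 lam0. mu0 \<in> weights n \<and> lam0 \<in> weights n \<and>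
            (\<lambda>k. of_int (mu0 k + lam0 k)) = (\<lambda>k. rho_nc n k - rho_c n k) \<and>
            (\<forall>\<alpha>\<in>pos_compact n. ip n mu0 \<alpha> \<ge> 0 \<and> ip n lam0 \<alpha> \<ge> 0) \<and>
            (\<forall>\<beta>\<in>pos_nc1 n. \<exists>\<alpha>\<in>pos_compact n. ip n (mu0 - \<beta>) \<alpha> < 0) \<and>
            (\<forall>\<gamma>\<in>pos_nc2 n. \<exists>\<alpha>\<in>pos_compact n. ip n (lam0 - \<gamma>) \<alpha> < 0)"
  then obtain mu lam where
    eq: "(\<lambda>k. of_int (mu k + lam k)) = (\<lambda>k. rho_nc n k - rho_c n k)" and
    dom: "\<forall>\<alpha>\<in>pos_compact n. ip n mu \<alpha> \<ge> 0 \<and> ip n lam \<alpha> \<ge> 0" and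
    b1: "\<forall>\<beta>\<in>pos_nc1 n. \<exists>\<alpha>\<in>pos_compact n. ip n (mu - \<beta>) \<alpha> < 0" and
    b2: "\<forall>\<gamma>\<in>pos_nc2 n. \<exists>\<alpha>\<in>pos_compact n. ip n (lam - \<gamma>) \<alpha> < 0"
    by blast
  have lamv: "lam k = (if odd k then 1 else 0) - mu k" if "1 \<le> k" "k \<le> n" for k
  proof -
    have "(of_int (mu k + lam k) :: rat) = rho_nc n k - rho_c n k" using fun_cong[OF eq, of k] by simp
    then have "(of_int (mu k + lam k) :: rat) = of_int (if odd k then 1 else 0)"
      using delta_rat[OF that] by simp
    then have "mu k + lam k = (if odd k then 1 else 0)" by (simp only: of_int_eq_iff)
    then show ?thesis by simp
  qed
  have FFin: "FF i j \<in> pos_compact n" if "1 \<le> i" "i < j" "j \<le> n" for i j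
    unfolding pc_eq using that by auto
  have dmu: "0 \<le> (-1) ^ (i - 1) * (mu i - mu j)" if "1 \<le> i" "i < j" "j \<le> n" for i j
    using dom FFin[OF that] ip_FF[of i j n mu] that by auto
  have dlam: "0 \<le> (-1) ^ (i - 1) * (lam i - lam j)" if "1 \<le> i" "i < j" "j \<le> n" for i j
    using dom FFin[OF that] ip_FF[of i j n lam] that by auto
  have sg2: "(-1::int) ^ (2 - 1) = -1" by simp
  have odds: "mu k = mu 1" if "odd k" "1 \<le> k" "k \<le> n" for k
  proof (cases "k = 1")
    case False
    then have "1 < k" using that by auto
    then show ?thesis using dmu[of 1 k] dlam[of 1 k] lamv[of 1] lamv[of k] that assms by auto
  qed simp
  have evens: "mu k = mu 2" if "even k" "1 \<le> k" "k \<le> n" for k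
  proof (cases "k = 2")
    case False
    have "k \<noteq> 1" using that by auto
    then have "2 < k" using that False by linarith
    then show ?thesis using dmu[of 2 k] dlam[of 2 k] lamv[of 2] lamv[of k] that assms by auto
  qed simp
  define c where "c = mu 2"
  define d where "d = mu 1 - mu 2"
  have d01: "d = 0 \<or> d = 1"
    using dmu[of 1 2] dlam[of 1 2] lamv[of 1] lamv[of 2] assms unfolding d_def by auto
  have muv: "mu k = c + (if odd k then d else 0)" if "1 \<le> k" "k \<le> n" for k
    using odds[OF _ that] evens[OF _ that] unfolding c_def d_def by auto
  have lamv': "lam k = (if odd k then 1 - d else 0) - c" if "1 \<le> k" "k \<le> n" for k
    using lamv[OF that] muv[OF that] by auto
  have FFof: "\<exists>i j. \<alpha> = FF i j \<and> 1 \<le> i \<and> i < j \<and> j \<le> n" if "\<alpha> \<in> pos_compact n" for \<alpha>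
    using that unfolding pc_eq by auto
  show False
    using d01
  proof
    assume d0: "d = 0"
    define p where "p = 2 * (n div 2)"
    have p: "even p" "4 \<le> p" "p \<le> n" "n \<le> p + 1" using assms unfolding p_def by auto
    define \<gamma> where "\<gamma> = (\<lambda>k. - (ebasis (p - 2) k + ebasis p k))"
    have "\<gamma> \<in> pos_nc2 n" unfolding pos_nc2_def \<gamma>_def using p
      by (intro CollectI exI[of _ "p - 2"] exI[of _ p]) auto
    then obtain \<alpha> where "\<alpha> \<in> pos_compact n" "ip n (lam - \<gamma>) \<alpha> < 0" using b2 by blast
    then obtain i j where ij: "1 \<le> i" "i < j" "j \<le> n" and neg: "ip n (lam - \<gamma>) (FF i j) < 0"
      using FFof by blast
    have v: "(lam - \<gamma>) x = (if odd x then 1 else 0) - c + (if x = p - 2 then 1 else 0) + (if x = p then 1 else 0)"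
      if "1 \<le> x" "x \<le> n" for x
      using lamv'[OF that] d0 p unfolding \<gamma>_def ebasis_def by auto
    have "(-1) ^ (i - 1) * ((lam - \<gamma>) i - (lam - \<gamma>) j) < 0"
      using neg ip_FF[of i j n "lam - \<gamma>"] ij by simp
    moreover have vi: "(lam - \<gamma>) i = (if odd i then 1 else 0) - c + (if i = p - 2 then 1 else 0) + (if i = p then 1 else 0)"
      using v[of i] ij by simp
    moreover have vj: "(lam - \<gamma>) j = (if odd j then 1 else 0) - c + (if j = p - 2 then 1 else 0) + (if j = p then 1 else 0)"
      using v[of j] ij by simp
    ultimately have H: "(-1) ^ (i - 1) * ((lam - \<gamma>) i - (lam - \<gamma>) j) < 0" by simp
    have pp: "even (p - 2)" "p - 2 \<noteq> p" using p by auto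
    show False
    proof (cases "odd i")
      case True
      then have "i \<noteq> p - 2" "i \<noteq> p" using p by auto
      then have "(lam - \<gamma>) i = 1 - c" using vi True by simp
      moreover have "(lam - \<gamma>) j \<le> 1 - c"
      proof (cases "odd j")
        case True
        then have "j \<noteq> p - 2" "j \<noteq> p" using p by auto
        then show ?thesis using vj True by simp
      next
        case False
        then show ?thesis using vj pp by auto
      qed
      ultimately show False using H sgn_odd[OF True] by simp
    next
      case False
      have "(i = p - 2 \<or> i = p) \<longrightarrow> odd j \<or> j = p" 
      proof
        assume "i = p - 2 \<or> i = p"
        then have "p - 2 < j" using ij by linarith
        then show "odd j \<or> j = p" using par_L1[of p j] p ij by auto
      qed
      moreover have "(lam - \<gamma>) j \<ge> - c" using vj by simp
      moreover have "(lam - \<gamma>) i = - c + (if i = p - 2 then 1 else 0) + (if i = p then 1 else 0)"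
        using vi False by simp
      moreover have "odd j \<Longrightarrow> (lam - \<gamma>) j \<ge> 1 - c" using vj by simp
      moreover have "j = p \<Longrightarrow> (lam - \<gamma>) j = 1 - c" using vj pp p by simp
      ultimately have "(lam - \<gamma>) i \<le> (lam - \<gamma>) j" using pp
        by (cases "i = p - 2"; cases "i = p") auto
      then show False using H sgn_even[of i] False ij(1) by simp
    qed
  next
    assume d1: "d = 1"
    define q where "q = 2 * ((n - 1) div 2) + 1"
    have q: "odd q" "3 \<le> q" "q \<le> n" "n \<le> q + 1" using assms unfolding q_def by auto
    define \<beta> where "\<beta> = (\<lambda>k. ebasis (q - 2) k + ebasis q k)"
    have "\<beta> \<in> pos_nc1 n" unfolding pos_nc1_def \<beta>_def using q
      by (intro CollectI exI[of _ "q - 2"] exI[of _ q]) auto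
    then obtain \<alpha> where "\<alpha> \<in> pos_compact n" "ip n (mu - \<beta>) \<alpha> < 0" using b1 by blast
    then obtain i j where ij: "1 \<le> i" "i < j" "j \<le> n" and neg: "ip n (mu - \<beta>) (FF i j) < 0"
      using FFof by blast
    have v: "(mu - \<beta>) x = c + (if odd x then 1 else 0) - (if x = q - 2 then 1 else 0) - (if x = q then 1 else 0)"
      if "1 \<le> x" "x \<le> n" for x
      using muv[OF that] d1 q unfolding \<beta>_def ebasis_def by auto
    have "(-1) ^ (i - 1) * ((mu - \<beta>) i - (mu - \<beta>) j) < 0"
      using neg ip_FF[of i j n "mu - \<beta>"] ij by simp
    moreover have vi: "(mu - \<beta>) i = c + (if odd i then 1 else 0) - (if i = q - 2 then 1 else 0) - (if i = q then 1 else 0)"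
      using v[of i] ij by simp
    moreover have vj: "(mu - \<beta>) j = c + (if odd j then 1 else 0) - (if j = q - 2 then 1 else 0) - (if j = q then 1 else 0)"
      using v[of j] ij by simp
    ultimately have H: "(-1) ^ (i - 1) * ((mu - \<beta>) i - (mu - \<beta>) j) < 0" by simp
    have qq: "odd (q - 2)" "q - 2 \<noteq> q" using q by auto
    show False
    proof (cases "odd i")
      case True
      have "(i = q - 2 \<or> i = q) \<longrightarrow> even j \<or> j = q" 
      proof
        assume "i = q - 2 \<or> i = q"
        then have "q - 2 < j" using ij by linarith
        then show "even j \<or> j = q" using par_L2[of q j] q ij by auto
      qed
      moreover have "(mu - \<beta>) j \<le> c + 1" using vj by simp
      moreover have "(mu - \<beta>) i = c + 1 - (if i = q - 2 then 1 else 0) - (if i = q then 1 else 0)"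
        using vi True by simp
      moreover have "even j \<Longrightarrow> (mu - \<beta>) j \<le> c" using vj by simp
      moreover have "j = q \<Longrightarrow> (mu - \<beta>) j = c" using vj qq q by simp
      ultimately have "(mu - \<beta>) i \<ge> (mu - \<beta>) j" using qq
        by (cases "i = q - 2"; cases "i = q") auto
      then show False using H sgn_odd[OF True] by simp
    next
      case False
      then have "i \<noteq> q - 2" "i \<noteq> q" using q by auto
      then have "(mu - \<beta>) i = c" using vi False by simp
      moreover have "(mu - \<beta>) j \<ge> c"
      proof (cases "odd j")
        case True then show ?thesis using vj qq by simp
      next
        case False then have "j \<noteq> q - 2" "j \<noteq> q" using qq q by auto
        then show ?thesis using vj False by simp
      qed
      ultimately show False using H sgn_even[of i] False ij(1) by simp
    qed
  qed
qed

end
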